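(* Let $c\in[\frac12,1)$ and let $d,\delta$ be positive integers with $d\ge\delta$. Let $G$ be a graph with maximum degree $\delta$ and $w:V(G)\to[0,1]$ a weight function with $w(V(G))=1$, and assume $G$ has no $d$-bounded $(w,c)$-balanced separator. Fix a bijection $\mathcal{O}:V(G)\to\{1,\dots,|V(G)|\}$. Let $x,y\in V(G)$ be non-adjacent and incomparable with respect to $\le_A$. Then $S_x$ and $S_y$ are loosely non-crossing, i.e. $A_x\cap C_y=\emptyset$ and $A_y\cap C_x=\emptyset$.
   Context: For $X\subseteq V(G)$, $w(X)=\sum_{x\in X}w(x)$; $N[v]=N(v)\cup\{v\}$; $N^d[v]$ is the set of vertices at distance at most $d$ from $v$. A set $X$ is $d$-bounded if $X\subseteq N^d[v]$ for some $v$. $X$ is a $(w,c)$-balanced separator if every connected component $D$ of $G\setminus X$ has $w(D)\le c$. For $v\in V(G)$, the canonical star separation $S_v=(A_v,C_v,B_v)$ is: $B_v$ the (under these assumptions unique) largest-weight connected component of $G\setminus N[v]$, $C_v$ the set consisting of $v$ and every vertex of $N(v)$ with a neighbor in $B_v$, and $A_v=V(G)\setminus(B_v\cup C_v)$. Two vertices $u,v$ are star twins if $B_u=B_v$, $C_u\setminus\{u\}=C_v\setminus\{v\}$ and $A_u\setminus\{v\}=A_v\setminus\{u\}$. The relation $\le_A$ is defined by: $x\le_A y$ if $x=y$, or $x,y$ are star twins and $\mathcal{O}(x)<\mathcal{O}(y)$, or $x,y$ are not star twins and $y\in A_x$. *)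

theory Defs
  imports Complex_Main
begin

definition graph :: "'a set \<Rightarrow> ('a \<Rightarrow> 'a \<Rightarrow> bool) \<Rightarrow> bool" where
  "graph V E \<longleftrightarrow> finite V \<and> (\<forall>u v. E u v \<longrightarrow> u \<in> V \<and> v \<in> V)
     \<and> (\<forall>u v. E u v \<longrightarrow> E v u) \<and> (\<forall>v. \<not> E v v)"

definition nbhd :: "'a set \<Rightarrow> ('a \<Rightarrow> 'a \<Rightarrow> bool) \<Rightarrow> 'a \<Rightarrow> 'a set" where
  "nbhd V E v = {u \<in> V. E v u}"

definition cnbhd :: "'a set \<Rightarrow> ('a \<Rightarrow> 'a \<Rightarrow> bool) \<Rightarrow> 'a \<Rightarrow> 'a set" where
  "cnbhd V E v = insert v (nbhd V E v)"

definition max_degree :: "'a set \<Rightarrow> ('a \<Rightarrow> 'a \<Rightarrow> bool) \<Rightarrow> nat" where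
  "max_degree V E = Max ((\<lambda>v. card (nbhd V E v)) ` V)"

definition weight :: "('a \<Rightarrow> real) \<Rightarrow> 'a set \<Rightarrow> real" where
  "weight w X = (\<Sum>x\<in>X. w x)"

definition edges_in :: "'a set \<Rightarrow> ('a \<Rightarrow> 'a \<Rightarrow> bool) \<Rightarrow> ('a \<times> 'a) set" where
  "edges_in S E = {(u, v). u \<in> S \<and> v \<in> S \<and> E u v}"

definition component :: "'a set \<Rightarrow> ('a \<Rightarrow> 'a \<Rightarrow> bool) \<Rightarrow> 'a set \<Rightarrow> bool" where
  "component S E D \<longleftrightarrow> (\<exists>u\<in>S. D = {v. (u, v) \<in> (edges_in S E)\<^sup>*})"

definition ball_d :: "'a set \<Rightarrow> ('a \<Rightarrow> 'a \<Rightarrow> bool) \<Rightarrow> nat \<Rightarrow> 'a \<Rightarrow> 'a set" where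
  "ball_d V E d v = {u \<in> V. \<exists>k\<le>d. (v, u) \<in> (edges_in V E) ^^ k}"

definition d_bounded :: "'a set \<Rightarrow> ('a \<Rightarrow> 'a \<Rightarrow> bool) \<Rightarrow> nat \<Rightarrow> 'a set \<Rightarrow> bool" where
  "d_bounded V E d X \<longleftrightarrow> (\<exists>v\<in>V. X \<subseteq> ball_d V E d v)"

definition balanced_sep :: "'a set \<Rightarrow> ('a \<Rightarrow> 'a \<Rightarrow> bool) \<Rightarrow> ('a \<Rightarrow> real) \<Rightarrow> real \<Rightarrow> 'a set \<Rightarrow> bool" where
  "balanced_sep V E w c X \<longleftrightarrow> X \<subseteq> V \<and> (\<forall>D. component (V - X) E D \<longrightarrow> weight w D \<le> c)"

definition starB :: "'a set \<Rightarrow> ('a \<Rightarrow> 'a \<Rightarrow> bool) \<Rightarrow> ('a \<Rightarrow> real) \<Rightarrow> 'a \<Rightarrow> 'a set" where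
  "starB V E w v = (THE D. component (V - cnbhd V E v) E D \<and>
      (\<forall>D'. component (V - cnbhd V E v) E D' \<longrightarrow> weight w D' \<le> weight w D))"

definition starC :: "'a set \<Rightarrow> ('a \<Rightarrow> 'a \<Rightarrow> bool) \<Rightarrow> ('a \<Rightarrow> real) \<Rightarrow> 'a \<Rightarrow> 'a set" where
  "starC V E w v = insert v {u \<in> nbhd V E v. \<exists>b\<in>starB V E w v. E u b}"

definition starA :: "'a set \<Rightarrow> ('a \<Rightarrow> 'a \<Rightarrow> bool) \<Rightarrow> ('a \<Rightarrow> real) \<Rightarrow> 'a \<Rightarrow> 'a set" where
  "starA V E w v = V - (starB V E w v \<union> starC V E w v)"

definition star_twins :: "'a set \<Rightarrow> ('a \<Rightarrow> 'a \<Rightarrow> bool) \<Rightarrow> ('a \<Rightarrow> real) \<Rightarrow> 'a \<Rightarrow> 'a \<Rightarrow> bool" where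
  "star_twins V E w u v \<longleftrightarrow> starB V E w u = starB V E w v
     \<and> starC V E w u - {u} = starC V E w v - {v}
     \<and> starA V E w u - {v} = starA V E w v - {u}"

definition le_A :: "'a set \<Rightarrow> ('a \<Rightarrow> 'a \<Rightarrow> bool) \<Rightarrow> ('a \<Rightarrow> real) \<Rightarrow> ('a \<Rightarrow> nat) \<Rightarrow> 'a \<Rightarrow> 'a \<Rightarrow> bool" where
  "le_A V E w ord x y \<longleftrightarrow> x = y
     \<or> (star_twins V E w x y \<and> ord x < ord y)
     \<or> (\<not> star_twins V E w x y \<and> y \<in> starA V E w x)"

end

theory Submission
  imports Defs
begin

lemma comp_sub:
  assumes "component S E D" shows "D \<subseteq> S"
proof
  fix v assume "v \<in> D"
  from assms obtain u where u: "u \<in> S" "D = {v. (u, v) \<in> (edges_in S E)\<^sup>*}"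
    unfolding component_def by blast
  with \<open>v \<in> D\<close> have "(u, v) \<in> (edges_in S E)\<^sup>*" by blast
  then show "v \<in> S" using u(1)
    by (induction rule: rtrancl_induct) (auto simp: edges_in_def)
qed

lemma comp_closed:
  assumes "component S E D" "a \<in> D" "b \<in> S" "E a b"
  shows "b \<in> D"
proof -
  from assms(1) obtain u where u: "u \<in> S" "D = {v. (u, v) \<in> (edges_in S E)\<^sup>*}"
    unfolding component_def by blast
  have "a \<in> S" using comp_sub[OF assms(1)] assms(2) by blast
  hence "(a, b) \<in> edges_in S E" using assms by (simp add: edges_in_def)
  with u assms(2) show ?thesis by (auto intro: rtrancl_into_rtrancl)
qed

lemma comp_disj:
  assumes "\<forall>u v. E u v \<longrightarrow> E v u"
    and "component S E D1" "component S E D2" "D1 \<inter> D2 \<noteq> {}"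
  shows "D1 = D2"
proof -
  let ?R = "edges_in S E"
  have symR: "sym ?R" using assms(1) by (auto simp: sym_def edges_in_def)
  hence symRs: "sym (?R\<^sup>*)" by (rule sym_rtrancl)
  from assms(2) obtain u1 where u1: "D1 = {v. (u1, v) \<in> ?R\<^sup>*}"
    unfolding component_def by blast
  from assms(3) obtain u2 where u2: "D2 = {v. (u2, v) \<in> ?R\<^sup>*}"
    unfolding component_def by blast
  from assms(4) obtain a where a: "(u1, a) \<in> ?R\<^sup>*" "(u2, a) \<in> ?R\<^sup>*"
    using u1 u2 by blast
  have "(a, u2) \<in> ?R\<^sup>*" using a(2) symRs by (meson symD)
  hence 1: "(u1, u2) \<in> ?R\<^sup>*" using a(1) by (meson rtrancl_trans)
  hence 2: "(u2, u1) \<in> ?R\<^sup>*" using symRs by (meson symD)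
  show ?thesis unfolding u1 u2 using 1 2 by (meson rtrancl_trans)
qed

lemma starB_comp:
  assumes c1: "1/2 \<le> c" and c2: "c < 1" and d: "0 < d"
    and g: "graph V E"
    and wn: "\<forall>v\<in>V. 0 \<le> w v \<and> w v \<le> 1"
    and wV: "weight w V = 1"
    and nosep: "\<not> (\<exists>X. d_bounded V E d X \<and> balanced_sep V E w c X)"
    and v: "v \<in> V"
  shows "component (V - cnbhd V E v) E (starB V E w v)"
proof -
  let ?X = "cnbhd V E v"
  let ?S = "V - ?X"
  have fin: "finite V" using g by (simp add: graph_def)
  have sym: "\<forall>u v. E u v \<longrightarrow> E v u" using g by (simp add: graph_def)
  have XV: "?X \<subseteq> V" using v by (auto simp: cnbhd_def nbhd_def)
  have "?X \<subseteq> ball_d V E d v"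
  proof
    fix u assume "u \<in> ?X"
    then consider "u = v" | "u \<in> V" "E v u" by (auto simp: cnbhd_def nbhd_def)
    then show "u \<in> ball_d V E d v"
    proof cases
      case 1 then show ?thesis using v unfolding ball_d_def
        by (intro CollectI conjI exI[of _ 0]) auto
    next
      case 2 then show ?thesis using v d unfolding ball_d_def
        by (intro CollectI conjI exI[of _ 1]) (auto simp: edges_in_def)
    qed
  qed
  hence db: "d_bounded V E d ?X" using v unfolding d_bounded_def by blast
  with nosep XV obtain D where D: "component ?S E D" "weight w D > c"
    unfolding balanced_sep_def by force
  have DS: "D \<subseteq> V" using comp_sub[OF D(1)] by blast
  have other: "weight w D' < weight w D" if "component ?S E D'" "D' \<noteq> D" for D'
  proof -
    have disj: "D \<inter> D' = {}" using comp_disj[OF sym D(1) that(1)] that(2) by blast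
    have D'V: "D' \<subseteq> V" using comp_sub[OF that(1)] by blast
    have fD: "finite D" "finite D'" using DS D'V fin finite_subset by auto
    have "weight w D + weight w D' = weight w (D \<union> D')"
      unfolding weight_def using sum.union_disjoint[OF fD disj, of w] by simp
    also have "\<dots> \<le> weight w V" unfolding weight_def
      using DS D'V wn fin by (intro sum_mono2) auto
    finally show ?thesis using wV D(2) c1 by linarith
  qed
  have P: "component ?S E D \<and> (\<forall>D'. component ?S E D' \<longrightarrow> weight w D' \<le> weight w D)"
    using D(1) other by (metis order_refl less_imp_le)
  have "starB V E w v = D"
    unfolding starB_def
  proof (rule the_equality)
    show "component ?S E D \<and> (\<forall>D'. component ?S E D' \<longrightarrow> weight w D' \<le> weight w D)"
      by (rule P)
  next
    fix D'' assume "component ?S E D'' \<and> (\<forall>D'. component ?S E D' \<longrightarrow> weight w D' \<le> weight w D'')"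
    then show "D'' = D" using D(1) other by force
  qed
  then show ?thesis using D(1) by simp
qed

lemma generic:
  assumes g: "graph V E" and x: "x \<in> V" and y: "y \<in> V" and xy: "x \<noteq> y"
    and nE: "\<not> E x y" and yA: "y \<notin> starA V E w x"
    and comp: "component (V - cnbhd V E x) E (starB V E w x)"
  shows "starA V E w x \<inter> starC V E w y = {}"
proof (rule ccontr)
  have sym: "\<forall>u v. E u v \<longrightarrow> E v u" using g by (simp add: graph_def)
  assume "starA V E w x \<inter> starC V E w y \<noteq> {}"
  then obtain z where zA: "z \<in> starA V E w x" and zC: "z \<in> starC V E w y" by blast
  have yC: "y \<notin> starC V E w x" using xy nE by (auto simp: starC_def nbhd_def)
  have yB: "y \<in> starB V E w x" using y yA yC by (auto simp: starA_def)
  have zV: "z \<in> V" and zB: "z \<notin> starB V E w x" and zCx: "z \<notin> starC V E w x"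
    using zA by (auto simp: starA_def)
  have "z \<noteq> y" using zB yB by blast
  hence Eyz: "E y z" using zC by (auto simp: starC_def nbhd_def)
  hence Ezy: "E z y" using sym by blast
  have "z \<noteq> x" using Eyz nE sym by blast
  moreover have "\<not> E x z" using zCx Ezy yB zV by (auto simp: starC_def nbhd_def)
  ultimately have "z \<in> V - cnbhd V E x" using zV by (auto simp: cnbhd_def nbhd_def)
  hence "z \<in> starB V E w x" using comp_closed[OF comp yB _ Eyz] by blast
  with zB show False by blast
qed

theorem lemma4p4:
  fixes V :: "'a set" and E :: "'a \<Rightarrow> 'a \<Rightarrow> bool" and w :: "'a \<Rightarrow> real"
    and ord :: "'a \<Rightarrow> nat" and c :: real and d \<delta> :: nat and x y :: 'a
  assumes "1/2 \<le> c" and "c < 1"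
    and "0 < d" and "0 < \<delta>" and "\<delta> \<le> d"
    and "graph V E"
    and "max_degree V E = \<delta>"
    and "\<forall>v\<in>V. 0 \<le> w v \<and> w v \<le> 1"
    and "weight w V = 1"
    and "\<not> (\<exists>X. d_bounded V E d X \<and> balanced_sep V E w c X)"
    and "bij_betw ord V {1..card V}"
    and "x \<in> V" and "y \<in> V" and "\<not> E x y"
    and "\<not> le_A V E w ord x y" and "\<not> le_A V E w ord y x"
  shows "starA V E w x \<inter> starC V E w y = {} \<and> starA V E w y \<inter> starC V E w x = {}"
proof -
  have sym: "\<forall>u v. E u v \<longrightarrow> E v u" using assms(6) by (simp add: graph_def)
  have xy: "x \<noteq> y" using assms(15) by (auto simp: le_A_def)
  have inj: "inj_on ord V" using assms(11) by (rule bij_betw_imp_inj_on)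
  have ntw: "\<not> star_twins V E w x y"
  proof
    assume tw: "star_twins V E w x y"
    hence tw': "star_twins V E w y x" by (auto simp: star_twins_def)
    have "\<not> ord x < ord y" using tw assms(15) by (auto simp: le_A_def)
    moreover have "\<not> ord y < ord x" using tw' assms(16) by (auto simp: le_A_def)
    ultimately have "ord x = ord y" by simp
    with inj assms(12,13) xy show False by (meson inj_onD)
  qed
  hence ntw': "\<not> star_twins V E w y x" by (auto simp: star_twins_def)
  have yA: "y \<notin> starA V E w x" using ntw assms(15) by (auto simp: le_A_def)
  have xA: "x \<notin> starA V E w y" using ntw' assms(16) by (auto simp: le_A_def)
  have cx: "component (V - cnbhd V E x) E (starB V E w x)"
    using starB_comp[OF assms(1,2,3,6,8,9,10,12)] .
  have cy: "component (V - cnbhd V E y) E (starB V E w y)"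
    using starB_comp[OF assms(1,2,3,6,8,9,10,13)] .
  have nE': "\<not> E y x" using sym assms(14) by blast
  show ?thesis
    using generic[OF assms(6,12,13) xy assms(14) yA cx]
      generic[OF assms(6,13,12) xy[symmetric] nE' xA cy] by blast
qed

end
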